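(* Let $n\ge3$, $\ell>0$, $\alpha\ge(n-2)\ell$, $S=\alpha I_n+\ell\mathbf{1}_n\mathbf{1}_n^\top$. For every signless Laplacian $P$, $$\Big\|\lim_{t\to\infty}(S+tP)^{-1}\Big\|_\infty\le\|S^{-1}\|_\infty=\frac1\alpha+\frac{\ell(n-2)}{\alpha(\alpha+\ell n)},$$ with equality if and only if $P=0$.
   Context: For a real matrix $P$, $\Delta_i(P)=|P_{ii}|-\sum_{j\ne i}|P_{ij}|$. A signless Laplacian is a real symmetric $n\times n$ matrix $P$ with $P_{ij}\in\{0,1\}$ for $i\ne j$, $P_{ii}\ge0$, and $\Delta_i(P)\in\{0,2\}$ for all $i$. (The limit exists.) $\|A\|_\infty$ is the maximum absolute row sum. *)

theory Defs
  imports "HOL-Analysis.Analysis"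
begin

definition row_dom :: "real^'n^'n \<Rightarrow> 'n \<Rightarrow> real" where
  "row_dom P i = \<bar>P $ i $ i\<bar> - (\<Sum>j\<in>UNIV - {i}. \<bar>P $ i $ j\<bar>)"

definition signless_laplacian :: "real^'n^'n \<Rightarrow> bool" where
  "signless_laplacian P \<longleftrightarrow>
     transpose P = P \<and>
     (\<forall>i j. i \<noteq> j \<longrightarrow> P $ i $ j \<in> {0, 1}) \<and>
     (\<forall>i. P $ i $ i \<ge> 0) \<and>
     (\<forall>i. row_dom P i \<in> {0, 2})"

definition inf_norm :: "real^'n^'n \<Rightarrow> real" where
  "inf_norm A = Max (range (\<lambda>i. \<Sum>j\<in>UNIV. \<bar>A $ i $ j\<bar>))"

definition ones_mat :: "real^'n^'n" where
  "ones_mat = (\<chi> i j. 1)"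

end

theory Submission
  imports Defs
begin
lemma ineq_c1:
  fixes n \<alpha> l X Y :: real
  assumes n3: "n \<ge> 3" and l: "l > 0" and al: "\<alpha> \<ge> (n-2)*l" and X: "X > 0"
    and Yb: "Y \<le> (n-2)*X"
    and W: "l*Y^2 + (n-1)*\<alpha>*X^2 + (n-1)*l*X^2 \<le> (n-1)*X"
  shows "(\<alpha>+l*n)*(Y-X) < n-2"
proof (cases "Y \<le> X")
  case True
  have "(n-2)*l > 0" "l*n > 0" using n3 l by simp_all
  then have "\<alpha> + l*n > 0" using al by linarith
  then have "(\<alpha>+l*n)*(Y-X) \<le> 0" using True by (simp add: mult_nonneg_nonpos)
  then show ?thesis using n3 by linarith
next
  case False
  define u where "u = Y - (n-1)*X"
  have "(n-2)*X - (n-1)*X = -X" by (simp add: algebra_simps)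
  then have u: "u < 0" using Yb X unfolding u_def by linarith
  have "l*(n-4) - (n-2)*l = -2*l" by (simp add: algebra_simps)
  then have c: "l*(n-4) - \<alpha> < 0" using al l by linarith
  have id: "(n-2)*(l*Y^2 + (n-1)*(\<alpha>+l)*X^2) - (n-1)*(\<alpha>+l*n)*(Y-X)*X
      = (n-2)*l*u^2 + (n-1)*(l*(n-4)-\<alpha>)*u*X"
    unfolding u_def by (simp add: algebra_simps power2_eq_square)
  have p1: "(n-2)*l*u^2 \<ge> 0" using n3 l by simp
  have p2: "(n-1)*(l*(n-4)-\<alpha>)*u*X > 0"
  proof -
    have "(l*(n-4)-\<alpha>)*u > 0" using c u by (simp add: mult_neg_neg)
    then have "(l*(n-4)-\<alpha>)*u*X > 0" using X by simp
    then show ?thesis using n3 by (simp add: mult.assoc)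
  qed
  have "(n-1)*(\<alpha>+l*n)*(Y-X)*X < (n-2)*(l*Y^2 + (n-1)*(\<alpha>+l)*X^2)"
    using id p1 p2 by linarith
  also have "\<dots> \<le> (n-2)*((n-1)*X)"
    using W n3 by (intro mult_left_mono) (auto simp: algebra_simps)
  finally have "((\<alpha>+l*n)*(Y-X)) * ((n-1)*X) < (n-2) * ((n-1)*X)"
    by (simp add: algebra_simps)
  moreover have "(n-1)*X > 0" using n3 X by simp
  ultimately show ?thesis using mult_less_cancel_right_pos by blast
qed
lemma ineq_c2:
  fixes n c D \<alpha> l q X Y :: real
  assumes nd: "n = c + D" and c2: "c \<ge> 2" and D1: "D \<ge> 1" and l: "l > 0"
    and al: "\<alpha> \<ge> (n-2)*l" and q: "q > 0" and X0: "X \<ge> 0"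
    and Xq: "X^2 \<le> c^2*q" and Yq: "Y^2 \<le> D^2*q"
    and W: "c*l*Y^2 + c*D*\<alpha>*q + D*l*X^2 \<le> D*X"
  shows "(\<alpha>+l*n)*(Y-X) < n-2"
proof (cases "Y \<le> X")
  case True
  have "(n-2)*l > 0" "l*n > 0" using nd c2 D1 l by simp_all
  then have "\<alpha> + l*n > 0" using al by linarith
  then have "(\<alpha>+l*n)*(Y-X) \<le> 0" using True by (simp add: mult_nonneg_nonpos)
  then show ?thesis using nd c2 D1 by linarith
next
  case False
  then have Y0: "Y > 0" using X0 by linarith
  have XY: "X*Y \<le> c*D*q"
  proof -
    have "(X*Y)^2 \<le> (c*D*q)^2"
    proof -
      have "(X*Y)^2 = X^2*Y^2" by (simp add: power_mult_distrib)
      also have "\<dots> \<le> (c^2*q)*(D^2*q)" using Xq Yq q by (intro mult_mono) auto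
      also have "\<dots> = (c*D*q)^2" by (simp add: power_mult_distrib power2_eq_square)
      finally show ?thesis .
    qed
    moreover have "c*D*q \<ge> 0" using c2 D1 q by simp
    ultimately show ?thesis by (meson power2_le_imp_le)
  qed
  define K1 where "K1 = (n-2)*c*D*q - D*X*(Y-X)"
  have K1: "K1 \<ge> 0"
  proof -
    have "K1 = D*((n-2)*c*q - X*Y + X^2)" unfolding K1_def by (simp add: algebra_simps power2_eq_square)
    moreover have "(n-2)*c*q - X*Y + X^2 \<ge> 0"
    proof -
      have "(n-2)*c*q - c*D*q = c*(c-2)*q" using nd by (simp add: algebra_simps)
      moreover have "c*(c-2)*q \<ge> 0" using c2 q by simp
      ultimately show ?thesis using XY zero_le_power2[of X] by linarith
    qed
    ultimately show ?thesis using D1 by simp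
  qed
  define T where "T = (n-2)*c*Y^2 - 2*(n-1)*D*X*Y + (3*n-4)*D*X^2 + (n-2)^2*c*D*q"
  define A where "A = (n-2)*c"
  have A: "A > 0" unfolding A_def using nd c2 D1 by simp
  define V where "V = (n-2)*c*(3*n-4)*X^2 + (n-2)^3*c^2*q - (n-1)^2*D*X^2"
  have AT: "A*T = (A*Y - (n-1)*D*X)^2 + D*V"
    unfolding A_def T_def V_def by (simp add: algebra_simps power2_eq_square power3_eq_cube)
  have coef: "(n-2)*c*(3*n-4) + (n-2)^3 - (n-1)^2*D \<ge> (n-2)*(4*n-5)"
  proof -
    have "(n-2)*c*(3*n-4) + (n-2)^3 - (n-1)^2*D = c*((n-2)*(3*n-4) + (n-1)^2) + (n-2)^3 - n*(n-1)^2"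
      using nd by (simp add: algebra_simps power2_eq_square)
    also have "\<dots> \<ge> 2*((n-2)*(3*n-4) + (n-1)^2) + (n-2)^3 - n*(n-1)^2"
    proof -
      have "(n-2)*(3*n-4) + (n-1)^2 \<ge> 0" using nd c2 D1 by simp
      then have "2*((n-2)*(3*n-4) + (n-1)^2) \<le> c*((n-2)*(3*n-4) + (n-1)^2)"
        using c2 by (intro mult_right_mono) auto
      then show ?thesis by linarith
    qed
    also have "2*((n-2)*(3*n-4) + (n-1)^2) + (n-2)^3 - n*(n-1)^2 = (n-2)*(4*n-5)"
      by (simp add: algebra_simps power2_eq_square power3_eq_cube)
    finally show ?thesis by simp
  qed
  have V: "V > 0"
  proof -
    have n3: "n \<ge> 3" using nd c2 D1 by simp
    have "V = ((n-2)*c*(3*n-4) + (n-2)^3 - (n-1)^2*D)*X^2 + (n-2)^3*(c^2*q - X^2)"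
      unfolding V_def by (simp add: algebra_simps)
    moreover have "((n-2)*c*(3*n-4) + (n-2)^3 - (n-1)^2*D)*X^2 \<ge> (n-2)*(4*n-5)*X^2"
      using coef by (intro mult_right_mono) auto
    moreover have "(n-2)^3*(c^2*q - X^2) \<ge> 0" using n3 Xq by simp
    moreover have "(n-2)*(4*n-5)*X^2 + (n-2)^3*(c^2*q - X^2) > 0"
    proof (cases "X = 0")
      case True
      then show ?thesis using n3 c2 q by simp
    next
      case False
      then have "(n-2)*(4*n-5)*X^2 > 0" using n3 by simp
      then show ?thesis using \<open>(n-2)^3*(c^2*q - X^2) \<ge> 0\<close> by linarith
    qed
    ultimately show ?thesis by linarith
  qed
  have T: "T > 0"
  proof -
    have "D*V > 0" using V D1 by simp
    then have "A*T > 0" using AT zero_le_power2[of "A*Y - (n-1)*D*X"] by linarith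
    then show ?thesis using A by (simp add: zero_less_mult_iff)
  qed
  define R where "R a = (n-2)*(c*l*Y^2 + c*D*a*q + D*l*X^2) - (a+l*n)*D*X*(Y-X)" for a
  have R1: "R \<alpha> - R ((n-2)*l) = (\<alpha> - (n-2)*l)*K1"
    unfolding R_def K1_def by (simp add: algebra_simps)
  have R2: "R ((n-2)*l) = l*T"
    unfolding R_def T_def by (simp add: algebra_simps power2_eq_square)
  have "R \<alpha> > 0"
  proof -
    have "(\<alpha> - (n-2)*l)*K1 \<ge> 0" using al K1 by simp
    moreover have "l*T > 0" using l T by simp
    ultimately show ?thesis using R1 R2 by linarith
  qed
  then have lt: "(\<alpha>+l*n)*D*X*(Y-X) < (n-2)*(c*l*Y^2 + c*D*\<alpha>*q + D*l*X^2)"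
    unfolding R_def by simp
  have Xp: "X > 0"
  proof (rule ccontr)
    assume "\<not> X > 0" then have "X = 0" using X0 by simp
    moreover have "c*D*\<alpha>*q > 0"
    proof -
      have "(n-2)*l > 0" using nd c2 D1 l by simp
      then have "\<alpha> > 0" using al by linarith
      then show ?thesis using c2 D1 q by simp
    qed
    moreover have "c*l*Y^2 \<ge> 0" "D*l*X^2 \<ge> 0" using c2 l D1 by auto
    ultimately show False using W by simp
  qed
  have "(n-2)*(c*l*Y^2 + c*D*\<alpha>*q + D*l*X^2) \<le> (n-2)*(D*X)"
    using W nd c2 D1 by (intro mult_left_mono) auto
  with lt have "((\<alpha>+l*n)*(Y-X))*(D*X) < (n-2)*(D*X)" by (simp add: algebra_simps)
  moreover have "D*X > 0" using D1 Xp by simp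
  ultimately show ?thesis using mult_less_cancel_right_pos by blast
qed

lemma sl_sym:
  assumes "signless_laplacian P" shows "P$k$i = P$i$k"
proof -
  have "transpose P = P" using assms unfolding signless_laplacian_def by blast
  then have "transpose P $ i $ k = P $ i $ k" by simp
  then show ?thesis by (simp add: transpose_def)
qed

lemma sl_off:
  assumes "signless_laplacian P" "i \<noteq> k" shows "P$i$k = 0 \<or> P$i$k = 1"
  using assms unfolding signless_laplacian_def by auto

lemma sl_rd:
  assumes "signless_laplacian P" shows "row_dom P i = 0 \<or> row_dom P i = 2"
  using assms unfolding signless_laplacian_def by auto

lemma sum_minus_if:
  fixes f :: "'n::finite \<Rightarrow> real"
  shows "(\<Sum>k\<in>UNIV-{i}. f k) = (\<Sum>k\<in>UNIV. if k = i then 0 else f k)"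
proof -
  have "(\<Sum>k\<in>UNIV. if k = i then 0 else f k) = (\<Sum>k\<in>UNIV-{i}. if k = i then 0 else f k)"
    by (subst sum.remove[of UNIV i]) auto
  also have "\<dots> = (\<Sum>k\<in>UNIV-{i}. f k)" by (rule sum.cong) auto
  finally show ?thesis by simp
qed

definition offd :: "real^'n^'n \<Rightarrow> 'n \<Rightarrow> 'n \<Rightarrow> real" where
  "offd P i k = (if k = i then 0 else P$i$k)"

lemma offd_nonneg: "signless_laplacian P \<Longrightarrow> offd P i k \<ge> 0"
  using sl_off[of P i k] unfolding offd_def by auto

lemma offd_sym: "signless_laplacian P \<Longrightarrow> offd P k i = offd P i k"
  using sl_sym[of P k i] unfolding offd_def by auto

lemma sl_diag:
  assumes "signless_laplacian P"
  shows "P$i$i = (\<Sum>k\<in>UNIV. offd P i k) + row_dom P i"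
proof -
  have d: "P$i$i \<ge> 0" using assms unfolding signless_laplacian_def by auto
  have "(\<Sum>k\<in>UNIV-{i}. \<bar>P$i$k\<bar>) = (\<Sum>k\<in>UNIV. offd P i k)"
    unfolding sum_minus_if offd_def
  proof (rule sum.cong)
    fix k assume "k \<in> (UNIV::'a set)"
    show "(if k = i then 0 else \<bar>P $ i $ k\<bar>) = (if k = i then 0 else P $ i $ k)"
      using sl_off[OF assms, of i k] by auto
  qed simp
  then show ?thesis using d unfolding row_dom_def by simp
qed

definition Kset :: "real^'n^'n \<Rightarrow> (real^'n) set" where
  "Kset P = {x. (\<forall>i k. i \<noteq> k \<and> P$i$k = 1 \<longrightarrow> x$k = - x$i) \<and> (\<forall>i. row_dom P i = 2 \<longrightarrow> x$i = 0)}"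

lemma K_odd:
  assumes "x \<in> Kset P" "\<And>y. \<phi> (-y) = - \<phi> y"
  shows "(\<chi> i. \<phi> (x$i)) \<in> Kset P"
proof -
  have "\<phi> 0 = 0" using assms(2)[of 0] by simp
  then show ?thesis using assms unfolding Kset_def by auto
qed

lemma K_diff: "x \<in> Kset P \<Longrightarrow> y \<in> Kset P \<Longrightarrow> x - y \<in> Kset P"
  unfolding Kset_def by auto

lemma K_P:
  assumes sl: "signless_laplacian P" and x: "x \<in> Kset P"
  shows "(\<Sum>k\<in>UNIV. P$i$k * x$k) = 0"
proof -
  have e: "P$i$k * x$k = - (offd P i k * x$i)" if "k \<noteq> i" for k
    using sl_off[OF sl, of i k] that x unfolding Kset_def offd_def by auto
  have "(\<Sum>k\<in>UNIV. P$i$k * x$k) = P$i$i*x$i + (\<Sum>k\<in>UNIV-{i}. P$i$k * x$k)"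
    by (subst sum.remove[of UNIV i]) auto
  also have "(\<Sum>k\<in>UNIV-{i}. P$i$k * x$k) = (\<Sum>k\<in>UNIV-{i}. - (offd P i k * x$i))"
    by (rule sum.cong) (use e in auto)
  also have "\<dots> = - (\<Sum>k\<in>UNIV. offd P i k) * x$i"
  proof -
    have "(\<Sum>k\<in>UNIV. offd P i k) = (\<Sum>k\<in>UNIV-{i}. offd P i k)"
      by (subst sum.remove[of UNIV i]) (auto simp: offd_def)
    then show ?thesis by (simp add: sum_negf sum_distrib_right)
  qed
  finally have "(\<Sum>k\<in>UNIV. P$i$k * x$k) = row_dom P i * x$i"
    using sl_diag[OF sl, of i] by (simp add: algebra_simps)
  moreover have "row_dom P i * x$i = 0"
    using sl_rd[OF sl, of i] x unfolding Kset_def by auto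
  ultimately show ?thesis by simp
qed

definition Qf :: "real^'n^'n \<Rightarrow> real^'n \<Rightarrow> real" where
  "Qf P x = (\<Sum>i\<in>UNIV. x$i * (\<Sum>k\<in>UNIV. P$i$k * x$k))"

lemma Q_id:
  assumes sl: "signless_laplacian P"
  shows "Qf P x = (\<Sum>i\<in>UNIV. row_dom P i * (x$i)^2)
      + (1/2) * (\<Sum>i\<in>UNIV. \<Sum>k\<in>UNIV. offd P i k * (x$i + x$k)^2)"
proof -
  have rowi: "x$i * (\<Sum>k\<in>UNIV. P$i$k * x$k)
      = row_dom P i * (x$i)^2 + (\<Sum>k\<in>UNIV. offd P i k * (x$i)^2) + (\<Sum>k\<in>UNIV. offd P i k * x$i * x$k)" for i
  proof -
    have "(\<Sum>k\<in>UNIV. P$i$k * x$k) = (\<Sum>k\<in>UNIV. offd P i k * x$k + (if k = i then P$i$i * x$k else 0))"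
      by (intro sum.cong) (auto simp: offd_def)
    also have "\<dots> = (\<Sum>k\<in>UNIV. offd P i k * x$k) + P$i$i * x$i"
      by (simp add: sum.distrib)
    finally have "x$i * (\<Sum>k\<in>UNIV. P$i$k * x$k) = (\<Sum>k\<in>UNIV. offd P i k * x$i * x$k) + P$i$i * (x$i)^2"
      by (simp add: algebra_simps sum_distrib_left power2_eq_square)
    moreover have "P$i$i*(x$i)^2 = row_dom P i * (x$i)^2 + (\<Sum>k\<in>UNIV. offd P i k * (x$i)^2)"
      by (simp add: sl_diag[OF sl, of i] distrib_right sum_distrib_right)
    ultimately show ?thesis by linarith
  qed
  have sw: "(\<Sum>i\<in>UNIV. \<Sum>k\<in>UNIV. offd P i k * (x$k)^2) = (\<Sum>i\<in>UNIV. \<Sum>k\<in>UNIV. offd P i k * (x$i)^2)"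
    by (subst sum.swap) (simp add: offd_sym[OF sl])
  have sq: "(\<Sum>i\<in>UNIV. \<Sum>k\<in>UNIV. offd P i k * (x$i + x$k)^2)
     = (\<Sum>i\<in>UNIV. \<Sum>k\<in>UNIV. offd P i k * (x$i)^2) + 2 * (\<Sum>i\<in>UNIV. \<Sum>k\<in>UNIV. offd P i k * x$i * x$k)
       + (\<Sum>i\<in>UNIV. \<Sum>k\<in>UNIV. offd P i k * (x$k)^2)"
    by (simp add: power2_sum algebra_simps sum.distrib sum_distrib_left)
  show ?thesis unfolding Qf_def rowi sum.distrib using sq sw by simp
qed

lemma Q_nonneg:
  assumes sl: "signless_laplacian P" shows "Qf P x \<ge> 0"
proof -
  have "row_dom P i \<ge> 0" for i using sl_rd[OF sl, of i] by auto
  then have "(\<Sum>i\<in>UNIV. row_dom P i * (x$i)^2) \<ge> 0" by (intro sum_nonneg) auto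
  moreover have "(\<Sum>i\<in>UNIV. \<Sum>k\<in>UNIV. offd P i k * (x$i + x$k)^2) \<ge> 0"
    by (intro sum_nonneg mult_nonneg_nonneg offd_nonneg[OF sl]) auto
  ultimately show ?thesis unfolding Q_id[OF sl] by simp
qed

lemma Q_zero:
  assumes sl: "signless_laplacian P" and q: "Qf P x = 0" shows "x \<in> Kset P"
proof -
  have r0: "row_dom P i \<ge> 0" for i using sl_rd[OF sl, of i] by auto
  have A: "(\<Sum>i\<in>UNIV. row_dom P i * (x$i)^2) \<ge> 0" using r0 by (intro sum_nonneg) auto
  have B: "(\<Sum>i\<in>UNIV. \<Sum>k\<in>UNIV. offd P i k * (x$i + x$k)^2) \<ge> 0"
    by (intro sum_nonneg mult_nonneg_nonneg offd_nonneg[OF sl]) auto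
  have A0: "(\<Sum>i\<in>UNIV. row_dom P i * (x$i)^2) = 0" and B0: "(\<Sum>i\<in>UNIV. \<Sum>k\<in>UNIV. offd P i k * (x$i + x$k)^2) = 0"
    using A B q unfolding Q_id[OF sl] by linarith+
  have "row_dom P i * (x$i)^2 = 0" for i
    using A0 r0 by (subst (asm) sum_nonneg_eq_0_iff) auto
  moreover have "(\<Sum>k\<in>UNIV. offd P i k * (x$i + x$k)^2) = 0" for i
    using B0 by (subst (asm) sum_nonneg_eq_0_iff) (auto intro!: sum_nonneg mult_nonneg_nonneg offd_nonneg[OF sl])
  then have "offd P i k * (x$i + x$k)^2 = 0" for i k
    by (subst (asm) sum_nonneg_eq_0_iff) (auto intro!: mult_nonneg_nonneg offd_nonneg[OF sl])
  note h1 = this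
  note h2 = \<open>\<And>i. row_dom P i * (x$i)^2 = 0\<close>
  show ?thesis unfolding Kset_def
  proof (intro CollectI conjI allI impI)
    fix i k assume ik: "i \<noteq> k \<and> P$i$k = 1"
    then have "offd P i k = 1" by (auto simp: offd_def)
    then have "(x$i + x$k)^2 = 0" using h1[of i k] by simp
    then have "x$i + x$k = 0" by simp
    then show "x$k = - x$i" by simp
  next
    fix i assume "row_dom P i = 2"
    then have "(x$i)^2 = 0" using h2[of i] by simp
    then show "x$i = 0" by simp
  qed
qed


lemma M_mv:
  "((\<alpha> *\<^sub>R mat 1 + l *\<^sub>R ones_mat + t *\<^sub>R P) *v x)$i
     = \<alpha>*x$i + l*(\<Sum>k\<in>UNIV. x$k) + t*(\<Sum>k\<in>UNIV. P$i$k*x$k)"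
proof -
  have "((\<alpha> *\<^sub>R mat 1 + l *\<^sub>R ones_mat + t *\<^sub>R P) *v x)$i
     = (\<Sum>j\<in>UNIV. (if i = j then \<alpha> * x$j else 0) + l * x$j + t*(P$i$j*x$j))"
    unfolding matrix_vector_mult_def by (auto intro!: sum.cong simp: mat_def ones_mat_def algebra_simps)
  also have "\<dots> = \<alpha>*x$i + l*(\<Sum>k\<in>UNIV. x$k) + t*(\<Sum>k\<in>UNIV. P$i$k*x$k)"
    by (simp add: sum.distrib sum_distrib_left)
  finally show ?thesis .
qed

lemma S_mv:
  "((\<alpha> *\<^sub>R mat 1 + l *\<^sub>R ones_mat) *v x)$i = \<alpha>*x$i + l*(\<Sum>k\<in>UNIV. x$k)"
  using M_mv[of \<alpha> l 0 P x i] by simp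

lemma energy:
  assumes "(\<alpha> *\<^sub>R mat 1 + l *\<^sub>R ones_mat + t *\<^sub>R P) *v x = b"
  shows "(\<Sum>i\<in>UNIV. x$i * b$i) = \<alpha>*(\<Sum>i\<in>UNIV. (x$i)^2) + l*(\<Sum>k\<in>UNIV. x$k)^2 + t*Qf P x"
proof -
  have "(\<Sum>i\<in>UNIV. x$i * b$i) = (\<Sum>i\<in>UNIV. x$i * (\<alpha>*x$i + l*(\<Sum>k\<in>UNIV. x$k) + t*(\<Sum>k\<in>UNIV. P$i$k*x$k)))"
    using assms[symmetric] by (simp add: M_mv)
  also have "\<dots> = \<alpha>*(\<Sum>i\<in>UNIV. (x$i)^2) + l*(\<Sum>k\<in>UNIV. x$k)^2 + t*Qf P x"
    by (simp add: Qf_def algebra_simps sum.distrib sum_distrib_left sum_distrib_right power2_eq_square)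
  finally show ?thesis .
qed

lemma M_inv:
  assumes sl: "signless_laplacian P" and a: "\<alpha> > 0" and l: "l \<ge> 0" and t: "t \<ge> 0"
  defines "M \<equiv> \<alpha> *\<^sub>R mat 1 + l *\<^sub>R ones_mat + t *\<^sub>R P"
  shows "M ** matrix_inv M = mat 1" "matrix_inv M ** M = mat 1"
proof -
  have z: "x = 0" if "M *v x = 0" for x
  proof -
    have "(\<Sum>i\<in>UNIV. x$i * (0::real^'a)$i) = \<alpha>*(\<Sum>i\<in>UNIV. (x$i)^2) + l*(\<Sum>k\<in>UNIV. x$k)^2 + t*Qf P x"
      using energy[of \<alpha> l t P x 0] that unfolding M_def by simp
    then have e: "\<alpha>*(\<Sum>i\<in>UNIV. (x$i)^2) + l*(\<Sum>k\<in>UNIV. x$k)^2 + t*Qf P x = 0" by simp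
    have "l*(\<Sum>k\<in>UNIV. x$k)^2 \<ge> 0" "t*Qf P x \<ge> 0" using l t Q_nonneg[OF sl] by auto
    moreover have "(\<Sum>i\<in>UNIV. (x$i)^2) \<ge> 0" by (intro sum_nonneg) auto
    ultimately have "\<alpha>*(\<Sum>i\<in>UNIV. (x$i)^2) \<ge> 0" "l*(\<Sum>k\<in>UNIV. x$k)^2 \<ge> 0" "t*Qf P x \<ge> 0" using a by auto
    then have "\<alpha>*(\<Sum>i\<in>UNIV. (x$i)^2) = 0" using e by linarith
    then have "(\<Sum>i\<in>UNIV. (x$i)^2) = 0" using a by simp
    then have "(x$i)^2 = 0" for i by (subst (asm) sum_nonneg_eq_0_iff) auto
    then show ?thesis by (simp add: vec_eq_iff)
  qed
  have "inj ((*v) M)"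
  proof (rule injI)
    fix x y assume "M *v x = M *v y"
    then have "M *v (x - y) = 0" by (simp add: matrix_vector_mult_diff_distrib)
    then show "x = y" using z[OF \<open>M *v (x - y) = 0\<close>] by simp
  qed
  then obtain B where "B ** M = mat 1" using matrix_left_invertible_injective by blast
  then have "invertible M" using invertible_left_inverse by blast
  then have "\<exists>A'. M ** A' = mat 1 \<and> A' ** M = mat 1" unfolding invertible_def by blast
  then have "M ** matrix_inv M = mat 1 \<and> matrix_inv M ** M = mat 1"
    unfolding matrix_inv_def by (rule someI_ex)
  then show "M ** matrix_inv M = mat 1" "matrix_inv M ** M = mat 1" by auto
qed

lemma col_sol:
  assumes sl: "signless_laplacian P" and a: "\<alpha> > 0" and l: "l \<ge> 0" and t: "t \<ge> 0"
  defines "M \<equiv> \<alpha> *\<^sub>R mat 1 + l *\<^sub>R ones_mat + t *\<^sub>R P"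
  shows "M *v (matrix_inv M *v axis j 1) = axis j 1"
  using M_inv[OF sl a l t] unfolding M_def
  by (simp add: matrix_vector_mul_assoc)

lemma sol_props:
  assumes sl: "signless_laplacian P" and a: "\<alpha> > 0" and l: "l \<ge> 0" and t: "t \<ge> 0"
    and eq: "(\<alpha> *\<^sub>R mat 1 + l *\<^sub>R ones_mat + t *\<^sub>R P) *v x = axis j 1"
  shows "norm x \<le> 1/\<alpha>" "t * Qf P x \<le> 1/\<alpha>"
    "\<And>w. w \<in> Kset P \<Longrightarrow> \<alpha>*(\<Sum>i\<in>UNIV. w$i*x$i) + l*(\<Sum>i\<in>UNIV. x$i)*(\<Sum>i\<in>UNIV. w$i) = w$j"
proof -
  have "(\<Sum>i\<in>UNIV. x$i * axis j 1 $i) = x$j"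
    by (simp add: axis_def if_distrib cong: if_cong)
  then have e: "x$j = \<alpha>*(\<Sum>i\<in>UNIV. (x$i)^2) + l*(\<Sum>k\<in>UNIV. x$k)^2 + t*Qf P x"
    using energy[OF eq] by simp
  have n2: "(\<Sum>i\<in>UNIV. (x$i)^2) = (norm x)^2"
  proof -
    have "(norm x)^2 = x \<bullet> x" by (simp add: power2_norm_eq_inner)
    then show ?thesis by (simp add: inner_vec_def power2_eq_square)
  qed
  have xj: "x$j \<le> norm x" using component_le_norm_cart[of x j] by simp
  have p1: "l*(\<Sum>k\<in>UNIV. x$k)^2 \<ge> 0" "t*Qf P x \<ge> 0" using l t Q_nonneg[OF sl] by auto
  have "\<alpha>*(\<Sum>i\<in>UNIV. (x$i)^2) = \<alpha> * (norm x)^2" using n2 by simp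
  then have "\<alpha> * (norm x)^2 \<le> norm x" using e xj p1 by linarith
  then have "\<alpha> * norm x \<le> 1"
    by (cases "norm x = 0") (auto simp: power2_eq_square)
  then show nb: "norm x \<le> 1/\<alpha>" using a by (simp add: field_simps)
  have "\<alpha>*(\<Sum>i\<in>UNIV. (x$i)^2) \<ge> 0" using a by (simp add: sum_nonneg)
  then show "t * Qf P x \<le> 1/\<alpha>" using e xj nb p1 by linarith
  fix w assume w: "w \<in> Kset P"
  have "(\<Sum>i\<in>UNIV. w$i * axis j 1 $i) = w$j"
    by (simp add: axis_def if_distrib cong: if_cong)
  also have "(\<Sum>i\<in>UNIV. w$i * axis j 1 $i) = (\<Sum>i\<in>UNIV. w$i * (\<alpha>*x$i + l*(\<Sum>k\<in>UNIV. x$k) + t*(\<Sum>k\<in>UNIV. P$i$k*x$k)))"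
    using eq[symmetric] by (simp add: M_mv)
  also have "\<dots> = \<alpha>*(\<Sum>i\<in>UNIV. w$i*x$i) + l*(\<Sum>i\<in>UNIV. x$i)*(\<Sum>i\<in>UNIV. w$i)
      + t*(\<Sum>i\<in>UNIV. w$i*(\<Sum>k\<in>UNIV. P$i$k*x$k))"
    by (simp add: algebra_simps sum.distrib sum_distrib_left sum_distrib_right) (rule sum.swap)
  also have "(\<Sum>i\<in>UNIV. w$i*(\<Sum>k\<in>UNIV. P$i$k*x$k)) = (\<Sum>k\<in>UNIV. x$k * (\<Sum>i\<in>UNIV. P$k$i*w$i))"
  proof -
    have "(\<Sum>i\<in>UNIV. w$i*(\<Sum>k\<in>UNIV. P$i$k*x$k)) = (\<Sum>i\<in>UNIV. \<Sum>k\<in>UNIV. w$i*P$i$k*x$k)"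
      by (simp add: sum_distrib_left mult.assoc)
    also have "\<dots> = (\<Sum>k\<in>UNIV. \<Sum>i\<in>UNIV. w$i*P$i$k*x$k)" by (rule sum.swap)
    also have "\<dots> = (\<Sum>k\<in>UNIV. x$k * (\<Sum>i\<in>UNIV. P$i$k*w$i))"
      by (simp add: sum_distrib_left mult_ac)
    also have "\<dots> = (\<Sum>k\<in>UNIV. x$k * (\<Sum>i\<in>UNIV. P$k$i*w$i))"
    proof (rule sum.cong[OF refl])
      fix k show "x$k * (\<Sum>i\<in>UNIV. P$i$k*w$i) = x$k * (\<Sum>i\<in>UNIV. P$k$i*w$i)"
        using sl_sym[OF sl, of k] by simp
    qed
    finally show ?thesis .
  qed
  also have "\<dots> = 0" using K_P[OF sl w] by simp
  finally show "\<alpha>*(\<Sum>i\<in>UNIV. w$i*x$i) + l*(\<Sum>i\<in>UNIV. x$i)*(\<Sum>i\<in>UNIV. w$i) = w$j" by simp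
qed


definition fsol :: "real \<Rightarrow> real \<Rightarrow> real^'n^'n \<Rightarrow> 'n \<Rightarrow> real \<Rightarrow> real^'n" where
  "fsol \<alpha> l P j t = matrix_inv (\<alpha> *\<^sub>R mat 1 + l *\<^sub>R ones_mat + (max t 0) *\<^sub>R P) *v axis j 1"

definition good :: "real^'n^'n \<Rightarrow> real \<Rightarrow> real \<Rightarrow> 'n \<Rightarrow> real^'n \<Rightarrow> bool" where
  "good P \<alpha> l j y \<longleftrightarrow> y \<in> Kset P \<and>
     (\<forall>w\<in>Kset P. \<alpha>*(\<Sum>i\<in>UNIV. w$i*y$i) + l*(\<Sum>i\<in>UNIV. y$i)*(\<Sum>i\<in>UNIV. w$i) = w$j)"

lemma fsol_props:
  assumes sl: "signless_laplacian P" and a: "\<alpha> > 0" and l: "l \<ge> 0"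
  shows "norm (fsol \<alpha> l P j t) \<le> 1/\<alpha>" "max t 0 * Qf P (fsol \<alpha> l P j t) \<le> 1/\<alpha>"
    "\<And>w. w \<in> Kset P \<Longrightarrow> \<alpha>*(\<Sum>i\<in>UNIV. w$i*fsol \<alpha> l P j t$i)
         + l*(\<Sum>i\<in>UNIV. fsol \<alpha> l P j t$i)*(\<Sum>i\<in>UNIV. w$i) = w$j"
  using sol_props[OF sl a l _ col_sol[OF sl a l, of "max t 0" j]]
  unfolding fsol_def by auto

lemma good_unique:
  assumes a: "\<alpha> > 0" and l: "l \<ge> 0" and g1: "good P \<alpha> l j y" and g2: "good P \<alpha> l j y'"
  shows "y = y'"
proof -
  define d where "d = y - y'"
  have dK: "d \<in> Kset P" using g1 g2 K_diff unfolding good_def d_def by blast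
  have e1: "\<alpha>*(\<Sum>i\<in>UNIV. d$i*y$i) + l*(\<Sum>i\<in>UNIV. y$i)*(\<Sum>i\<in>UNIV. d$i) = d$j"
    using g1 dK unfolding good_def by blast
  have e2: "\<alpha>*(\<Sum>i\<in>UNIV. d$i*y'$i) + l*(\<Sum>i\<in>UNIV. y'$i)*(\<Sum>i\<in>UNIV. d$i) = d$j"
    using g2 dK unfolding good_def by blast
  have s1: "(\<Sum>i\<in>UNIV. d$i*y$i) - (\<Sum>i\<in>UNIV. d$i*y'$i) = (\<Sum>i\<in>UNIV. d$i*d$i)"
    by (simp add: sum_subtractf[symmetric] d_def right_diff_distrib)
  have s2: "(\<Sum>i\<in>UNIV. y$i) - (\<Sum>i\<in>UNIV. y'$i) = (\<Sum>i\<in>UNIV. d$i)"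
    by (simp add: sum_subtractf[symmetric] d_def)
  have "\<alpha>*((\<Sum>i\<in>UNIV. d$i*y$i) - (\<Sum>i\<in>UNIV. d$i*y'$i)) + l*((\<Sum>i\<in>UNIV. y$i) - (\<Sum>i\<in>UNIV. y'$i))*(\<Sum>i\<in>UNIV. d$i) = 0"
    using e1 e2 by (simp add: algebra_simps)
  then have z: "\<alpha>*(\<Sum>i\<in>UNIV. d$i*d$i) + l*((\<Sum>i\<in>UNIV. d$i)*(\<Sum>i\<in>UNIV. d$i)) = 0"
    unfolding s1 s2 by (simp add: mult.assoc)
  have "(\<Sum>i\<in>UNIV. d$i*d$i) \<ge> 0" by (simp add: sum_nonneg)
  moreover have "l*((\<Sum>i\<in>UNIV. d$i)*(\<Sum>i\<in>UNIV. d$i)) \<ge> 0" using l by simp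
  moreover have "\<alpha>*(\<Sum>i\<in>UNIV. d$i*d$i) \<ge> 0" using a \<open>(\<Sum>i\<in>UNIV. d$i*d$i) \<ge> 0\<close> by simp
  ultimately have "\<alpha>*(\<Sum>i\<in>UNIV. d$i*d$i) = 0" using z by linarith
  then have "(\<Sum>i\<in>UNIV. d$i*d$i) = 0" using a by simp
  then have "d$i*d$i = 0" for i by (subst (asm) sum_nonneg_eq_0_iff) auto
  then have "d = 0" by (simp add: vec_eq_iff)
  then show ?thesis unfolding d_def by simp
qed

lemma Qf_cont: "(g \<longlongrightarrow> y) F \<Longrightarrow> ((\<lambda>k. Qf P (g k)) \<longlongrightarrow> Qf P y) F"
  unfolding Qf_def by (intro tendsto_intros)

lemma limit_good:
  assumes sl: "signless_laplacian P" and a: "\<alpha> > 0" and l: "l \<ge> 0"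
    and r: "filterlim r at_top sequentially"
    and lim: "(\<lambda>k. fsol \<alpha> l P j (r k)) \<longlonglongrightarrow> y"
  shows "good P \<alpha> l j y"
proof -
  let ?g = "\<lambda>k. fsol \<alpha> l P j (r k)"
  have eq: "\<alpha>*(\<Sum>i\<in>UNIV. w$i*y$i) + l*(\<Sum>i\<in>UNIV. y$i)*(\<Sum>i\<in>UNIV. w$i) = w$j" if w: "w \<in> Kset P" for w
  proof -
    have t1: "(\<lambda>k. \<alpha>*(\<Sum>i\<in>UNIV. w$i*?g k$i) + l*(\<Sum>i\<in>UNIV. ?g k$i)*(\<Sum>i\<in>UNIV. w$i))
        \<longlonglongrightarrow> \<alpha>*(\<Sum>i\<in>UNIV. w$i*y$i) + l*(\<Sum>i\<in>UNIV. y$i)*(\<Sum>i\<in>UNIV. w$i)"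
      by (intro tendsto_intros lim)
    have e: "(\<lambda>k. \<alpha>*(\<Sum>i\<in>UNIV. w$i*?g k$i) + l*(\<Sum>i\<in>UNIV. ?g k$i)*(\<Sum>i\<in>UNIV. w$i)) = (\<lambda>k. w$j)"
      using fsol_props(3)[OF sl a l w] by simp
    have "(\<lambda>k. w$j) \<longlonglongrightarrow> \<alpha>*(\<Sum>i\<in>UNIV. w$i*y$i) + l*(\<Sum>i\<in>UNIV. y$i)*(\<Sum>i\<in>UNIV. w$i)"
      using t1 unfolding e .
    then have "w$j = \<alpha>*(\<Sum>i\<in>UNIV. w$i*y$i) + l*(\<Sum>i\<in>UNIV. y$i)*(\<Sum>i\<in>UNIV. w$i)"
      by (rule LIMSEQ_unique[OF tendsto_const])
    then show ?thesis by simp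
  qed
  have Qlim: "(\<lambda>k. Qf P (?g k)) \<longlonglongrightarrow> Qf P y" by (rule Qf_cont[OF lim])
  have Qb: "Qf P y \<le> 1/(\<alpha>*T)" if T: "T > 0" for T
  proof (rule tendsto_upperbound[OF Qlim])
    have "eventually (\<lambda>k. r k \<ge> T) sequentially" using r by (simp add: filterlim_at_top)
    then show "eventually (\<lambda>k. Qf P (?g k) \<le> 1/(\<alpha>*T)) sequentially"
    proof eventually_elim
      case (elim k)
      have m: "max (r k) 0 \<ge> T" using elim by simp
      have "max (r k) 0 * Qf P (?g k) \<le> 1/\<alpha>" by (rule fsol_props(2)[OF sl a l])
      moreover have "T * Qf P (?g k) \<le> max (r k) 0 * Qf P (?g k)"
        using m Q_nonneg[OF sl] by (intro mult_right_mono) auto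
      ultimately have "T * Qf P (?g k) \<le> 1/\<alpha>" by linarith
      then show ?case using T a by (simp add: field_simps)
    qed
  qed simp
  have "Qf P y = 0"
  proof (rule ccontr)
    assume "Qf P y \<noteq> 0"
    then have qp: "Qf P y > 0" using Q_nonneg[OF sl, of y] by simp
    have T: "2/(\<alpha>*Qf P y) > 0" using qp a by simp
    have "Qf P y \<le> 1/(\<alpha>*(2/(\<alpha>*Qf P y)))" by (rule Qb[OF T])
    also have "1/(\<alpha>*(2/(\<alpha>*Qf P y))) = Qf P y / 2" using qp a by (simp add: field_simps)
    finally show False using qp by simp
  qed
  then have "y \<in> Kset P" by (rule Q_zero[OF sl])
  then show ?thesis unfolding good_def using eq by blast
qed

lemma conv_col:
  assumes sl: "signless_laplacian P" and a: "\<alpha> > 0" and l: "l \<ge> 0"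
  shows "\<exists>z. good P \<alpha> l j z \<and> (fsol \<alpha> l P j \<longlongrightarrow> z) at_top"
proof -
  let ?f = "fsol \<alpha> l P j"
  have bd: "bounded (range (\<lambda>k. ?f (h k)))" for h :: "nat \<Rightarrow> real"
    unfolding bounded_iff using fsol_props(1)[OF sl a l] by blast
  obtain z \<rho> where \<rho>: "strict_mono \<rho>" and zl: "((\<lambda>k. ?f (real k)) \<circ> \<rho>) \<longlonglongrightarrow> z"
    using bounded_imp_convergent_subsequence[OF bd[of real]] by blast
  have r1: "filterlim (\<lambda>k. real (\<rho> k)) at_top sequentially"
    using filterlim_compose[OF filterlim_real_sequentially filterlim_subseq[OF \<rho>]] by (simp add: o_def)
  have gz: "good P \<alpha> l j z"
    using limit_good[OF sl a l r1] zl by (simp add: o_def)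
  have "(?f \<longlongrightarrow> z) at_top"
  proof (rule ccontr)
    assume "\<not> (?f \<longlongrightarrow> z) at_top"
    then obtain e where e: "e > 0" and ne: "\<not> eventually (\<lambda>t. dist (?f t) z < e) at_top"
      unfolding tendsto_iff by blast
    have "\<forall>N. \<exists>t\<ge>N. dist (?f t) z \<ge> e" using ne unfolding eventually_at_top_linorder
      by (meson not_le)
    then obtain T where T: "\<And>N. T N \<ge> N" "\<And>N. dist (?f (T N)) z \<ge> e" by metis
    obtain y \<rho>' where \<rho>': "strict_mono \<rho>'" and yl: "((\<lambda>k. ?f (T (real k))) \<circ> \<rho>') \<longlonglongrightarrow> y"
      using bounded_imp_convergent_subsequence[OF bd[of "\<lambda>k. T (real k)"]] by blast
    have r0: "filterlim (\<lambda>k. real (\<rho>' k)) at_top sequentially"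
      using filterlim_compose[OF filterlim_real_sequentially filterlim_subseq[OF \<rho>']] by (simp add: o_def)
    have r2: "filterlim (\<lambda>k. T (real (\<rho>' k))) at_top sequentially"
      by (rule filterlim_at_top_mono[OF r0]) (use T(1) in auto)
    have "good P \<alpha> l j y"
      using limit_good[OF sl a l r2] yl by (simp add: o_def)
    then have yz: "y = z" using good_unique[OF a l] gz by blast
    have "(\<lambda>k. dist (?f (T (real (\<rho>' k)))) z) \<longlonglongrightarrow> dist y z"
      using yl by (intro tendsto_intros) (simp add: o_def)
    then have "e \<le> dist y z"
      by (rule tendsto_lowerbound) (use T(2) in auto)
    then show False using yz e by simp
  qed
  then show ?thesis using gz by blast
qed


lemma cs_sum:
  fixes f :: "'a \<Rightarrow> real"
  assumes "finite A"
  shows "(sum f A)^2 \<le> real (card A) * (\<Sum>i\<in>A. (f i)^2)"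
proof -
  have "0 \<le> (\<Sum>i\<in>A. \<Sum>k\<in>A. (f i - f k)^2)" by (intro sum_nonneg) auto
  also have "\<dots> = (\<Sum>i\<in>A. \<Sum>k\<in>A. (f i)^2 + (f k)^2 - 2 * (f i * f k))"
    by (simp add: power2_diff algebra_simps)
  also have "\<dots> = 2*(real (card A) * (\<Sum>i\<in>A. (f i)^2)) - 2*(sum f A)^2"
    by (simp add: sum_subtractf sum.distrib sum_distrib_left sum_distrib_right power2_eq_square algebra_simps)
  finally show ?thesis by simp
qed

lemma probe:
  assumes g: "good P \<alpha> l j z" and odd: "\<And>y. \<phi> (-y) = - \<phi> y"
  shows "\<alpha>*(\<Sum>i\<in>UNIV. \<phi> (z$i)*z$i) + l*(\<Sum>i\<in>UNIV. z$i)*(\<Sum>i\<in>UNIV. \<phi> (z$i)) = \<phi> (z$j)"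
proof -
  have "(\<chi> i. \<phi> (z$i)) \<in> Kset P" by (rule K_odd) (use g odd in \<open>auto simp: good_def\<close>)
  then show ?thesis using g unfolding good_def by force
qed

lemma sum_abs_sgn:
  fixes z :: "'a \<Rightarrow> real"
  assumes "finite A" shows "\<bar>\<Sum>i\<in>A. sgn (z i)\<bar> \<le> real (card A)"
proof -
  have "\<bar>\<Sum>i\<in>A. sgn (z i)\<bar> \<le> (\<Sum>i\<in>A. \<bar>sgn (z i)\<bar>)" by (rule sum_abs)
  also have "\<dots> \<le> (\<Sum>i\<in>A. 1)" by (intro sum_mono) (simp add: abs_sgn_eq)
  finally show ?thesis by simp
qed

lemma sum_abs_sgn_remove:
  fixes z :: "'a \<Rightarrow> real"
  assumes "finite A" "i \<in> A" "z i = 0"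
  shows "\<bar>\<Sum>k\<in>A. sgn (z k)\<bar> \<le> real (card A) - 1"
proof -
  have "(\<Sum>k\<in>A. sgn (z k)) = sgn (z i) + (\<Sum>k\<in>A-{i}. sgn (z k))"
    using assms by (simp add: sum.remove)
  then have "\<bar>\<Sum>k\<in>A. sgn (z k)\<bar> \<le> real (card (A-{i}))" using sum_abs_sgn[of "A-{i}" z] assms by simp
  moreover have "card A \<ge> 1"
  proof -
    have "card A > 0" using assms by (auto simp: card_gt_0_iff)
    then show ?thesis by simp
  qed
  ultimately show ?thesis using assms by (simp add: of_nat_diff)
qed

lemma sum_abs_sgn_remove2:
  fixes z :: "'a \<Rightarrow> real"
  assumes "finite A" "i \<in> A" "k \<in> A" "i \<noteq> k" "z k = - z i"
  shows "\<bar>\<Sum>k\<in>A. sgn (z k)\<bar> \<le> real (card A) - 1"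
proof -
  have e1: "(\<Sum>k\<in>A. sgn (z k)) = sgn (z i) + (\<Sum>k\<in>A-{i}. sgn (z k))"
    using assms by (simp add: sum.remove)
  have e2: "(\<Sum>k\<in>A-{i}. sgn (z k)) = sgn (z k) + (\<Sum>k\<in>A-{i}-{k}. sgn (z k))"
    using assms by (subst sum.remove[of "A-{i}" k]) auto
  have e3: "sgn (z k) = - sgn (z i)" using assms by (simp add: sgn_minus)
  have e: "(\<Sum>k\<in>A. sgn (z k)) = (\<Sum>k\<in>A-{i}-{k}. sgn (z k))"
    using e1 e2 e3 by linarith
  have c1: "card (A-{i}) = card A - 1" using assms by (simp add: card_Diff_singleton)
  have c2: "card (A-{i}-{k}) = card (A-{i}) - 1" using assms by (simp add: card_Diff_singleton)
  have "card (A-{i}-{k}) \<le> card A - 1" using c1 c2 by simp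
  moreover have "card A \<ge> 1"
  proof -
    have "card A > 0" using assms by (auto simp: card_gt_0_iff)
    then show ?thesis by simp
  qed
  ultimately have "real (card (A-{i}-{k})) \<le> real (card A) - 1" by linarith
  then show ?thesis using e sum_abs_sgn[of "A-{i}-{k}" z] assms by simp
qed


lemma P_witness:
  assumes sl: "signless_laplacian P" and P0: "P \<noteq> 0" and z: "z \<in> Kset P"
  shows "(\<exists>i. z$i = 0) \<or> (\<exists>i k. i \<noteq> k \<and> z$k = - z$i)"
proof -
  obtain i k where ik: "P$i$k \<noteq> 0" using P0 by (metis vec_eq_iff zero_index)
  have edge: "z$k' = - z$i'" if "i' \<noteq> k'" "P$i'$k' \<noteq> 0" for i' k'
    using sl_off[OF sl that(1)] that z unfolding Kset_def by auto
  show ?thesis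
  proof (cases "i = k")
    case False then show ?thesis using edge ik by blast
  next
    case True
    show ?thesis
    proof (cases "row_dom P i = 2")
      case True then show ?thesis using z unfolding Kset_def by blast
    next
      case False
      then have "row_dom P i = 0" using sl_rd[OF sl, of i] by auto
      then have "(\<Sum>k\<in>UNIV. offd P i k) \<noteq> 0" using sl_diag[OF sl, of i] ik True by simp
      then obtain k' where "offd P i k' \<noteq> 0" by (meson sum.neutral)
      then have "i \<noteq> k'" "P$i$k' \<noteq> 0" unfolding offd_def by (auto split: if_splits)
      then show ?thesis using edge by blast
    qed
  qed
qed

lemma sum_if_set: "(\<Sum>i\<in>(UNIV::'n::finite set). if Q i then f i else 0) = sum f {i. Q i}"
  by (simp add: sum.inter_filter[symmetric])

lemma sgn_mul_self: "sgn (y::real) * y = \<bar>y\<bar>"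
  by (simp add: sgn_real_def)

lemma norm_bound:
  fixes P :: "real^'n^'n" and z :: "real^'n"
  assumes sl: "signless_laplacian P" and P0: "P \<noteq> 0" and n3: "real CARD('n) \<ge> 3" and l: "l > 0"
    and al: "\<alpha> \<ge> (real CARD('n) - 2)*l" and g: "good P \<alpha> l j z"
  shows "(\<Sum>i\<in>UNIV. \<bar>z$i\<bar>) < 1/\<alpha> + l*(real CARD('n) - 2)/(\<alpha>*(\<alpha> + l*real CARD('n)))"
proof -
  define n where "n = real CARD('n)"
  have al': "\<alpha> \<ge> (n-2)*l" using al unfolding n_def .
  have "(n-2)*l > 0" using n3 l unfolding n_def by simp
  then have apos: "\<alpha> > 0" using al' by linarith
  have "l*n > 0" using l n3 unfolding n_def by simp
  then have anl: "\<alpha> + l*n > 0" using apos by linarith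
  define B where "B = 1/\<alpha> + l*(n - 2)/(\<alpha>*(\<alpha> + l*n))"
  have Bpos: "B > 0"
  proof -
    have "l*(n-2) \<ge> 0" using l n3 unfolding n_def by simp
    moreover have "\<alpha>*(\<alpha>+l*n) > 0" using apos anl by simp
    ultimately have "l*(n-2)/(\<alpha>*(\<alpha>+l*n)) \<ge> 0" by (simp add: divide_nonneg_pos)
    moreover have "1/\<alpha> > 0" using apos by simp
    ultimately show ?thesis unfolding B_def by linarith
  qed
  define \<sigma> where "\<sigma> = (\<Sum>i\<in>UNIV. z$i)"
  define a where "a = z$j"
  have pid: "\<alpha>*(\<Sum>i\<in>UNIV. z$i*z$i) + l*\<sigma>*\<sigma> = a"
    using probe[OF g, of "\<lambda>y. y"] unfolding \<sigma>_def a_def by simp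
  have sq0: "(\<Sum>i\<in>UNIV. z$i*z$i) \<ge> 0" by (simp add: sum_nonneg)
  have "\<alpha>*(\<Sum>i\<in>UNIV. z$i*z$i) \<ge> 0" using sq0 apos by simp
  moreover have "l*\<sigma>*\<sigma> \<ge> 0" using l by (simp add: mult.assoc)
  ultimately have a0: "a \<ge> 0" using pid by linarith
  have goal_from_key: "(\<Sum>i\<in>UNIV. \<bar>z$i\<bar>) < B"
    if key_hyp: "\<alpha> * (\<Sum>i\<in>UNIV. \<bar>z$i\<bar>) = 1 + l*Z" "(\<alpha>+l*n)*Z < n-2" for Z
  proof -
    have "Z < (n-2)/(\<alpha>+l*n)" using key_hyp(2) anl by (simp add: field_simps)
    then have "l*Z < l*((n-2)/(\<alpha>+l*n))" by (rule mult_strict_left_mono[OF _ l])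
    moreover have "\<alpha> * B = 1 + l*((n-2)/(\<alpha>+l*n))"
    proof -
      have ne: "\<alpha> \<noteq> 0" "\<alpha> + l*n \<noteq> 0" using apos anl by auto
      have "l*(n - 2)/(\<alpha>*(\<alpha> + l*n)) = (l*(n-2)/(\<alpha>+l*n))/\<alpha>"
        by (simp add: divide_divide_eq_left mult.commute)
      then have "\<alpha> * (l*(n - 2)/(\<alpha>*(\<alpha> + l*n))) = l*(n-2)/(\<alpha>+l*n)"
        using ne by simp
      then have "\<alpha> * (l*(n - 2)/(\<alpha>*(\<alpha> + l*n))) = l*((n-2)/(\<alpha>+l*n))"
        by simp
      moreover have "\<alpha> * (1/\<alpha>) = 1" using ne by simp
      ultimately show ?thesis unfolding B_def by (simp add: distrib_left)
    qed
    ultimately have "\<alpha> * (\<Sum>i\<in>UNIV. \<bar>z$i\<bar>) < \<alpha> * B"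
      unfolding key_hyp(1) by simp
    then show ?thesis using apos by simp
  qed
  have "(\<Sum>i\<in>UNIV. \<bar>z$i\<bar>) < B"
  proof (cases "a = 0")
    case True
    have "l*\<sigma>*\<sigma> \<ge> 0" using l by (simp add: mult.assoc)
    then have "\<alpha>*(\<Sum>i\<in>UNIV. z$i*z$i) \<le> 0" using pid True by linarith
    then have "(\<Sum>i\<in>UNIV. z$i*z$i) = 0" using sq0 apos by (simp add: mult_le_0_iff)
    then have "z$i*z$i = 0" for i by (subst (asm) sum_nonneg_eq_0_iff) auto
    then have "(\<Sum>i\<in>UNIV. \<bar>z$i\<bar>) = 0" by simp
    then show ?thesis using Bpos by simp
  next
    case False
    then have apos': "a > 0" using a0 by simp
    define G1 where "G1 = {i. \<bar>z$i\<bar> = a}"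
    define G2 where "G2 = {i. \<bar>z$i\<bar> \<noteq> a}"
    define c where "c = real (card G1)"
    define D where "D = real (card G2)"
    have jG1: "j \<in> G1" unfolding G1_def a_def using apos' a_def by simp
    have cD: "c + D = n"
    proof -
      have "card G1 + card G2 = card (G1 \<union> G2)"
        by (rule card_Un_disjoint[symmetric]) (auto simp: G1_def G2_def)
      moreover have "G1 \<union> G2 = UNIV" unfolding G1_def G2_def by auto
      ultimately show ?thesis unfolding c_def D_def n_def by (metis of_nat_add)
    qed
    have c1: "c \<ge> 1"
    proof -
      have "G1 \<noteq> {}" using jG1 by blast
      then have "card G1 > 0" by (simp add: card_gt_0_iff)
      then show ?thesis unfolding c_def by simp
    qed
    define gS where "gS = (\<Sum>i\<in>G1. sgn (z$i))"
    define m where "m = (\<Sum>i\<in>G2. sgn (z$i))"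
    define N1 where "N1 = (\<Sum>i\<in>G2. \<bar>z$i\<bar>)"
    define E2 where "E2 = (\<Sum>i\<in>G2. (z$i)^2)"
    define \<sigma>2 where "\<sigma>2 = (\<Sum>i\<in>G2. z$i)"
    have eq1: "\<alpha>*(c*a) + l*\<sigma>*gS = 1"
    proof -
      have p: "\<alpha>*(\<Sum>i\<in>UNIV. (if \<bar>z$i\<bar> = a then sgn (z$i) else 0)*z$i) + l*\<sigma>*(\<Sum>i\<in>UNIV. if \<bar>z$i\<bar> = a then sgn (z$i) else 0)
          = (if \<bar>z$j\<bar> = a then sgn (z$j) else 0)"
        using probe[OF g, of "\<lambda>y. if \<bar>y\<bar> = a then sgn y else 0"] unfolding \<sigma>_def by (simp add: sgn_minus)
      have "(\<Sum>i\<in>UNIV. (if \<bar>z$i\<bar> = a then sgn (z$i) else 0)*z$i) = (\<Sum>i\<in>UNIV. if \<bar>z$i\<bar> = a then a else 0)"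
        by (intro sum.cong) (auto simp: sgn_mul_self)
      also have "\<dots> = c*a" unfolding sum_if_set c_def G1_def by simp
      finally have 1: "(\<Sum>i\<in>UNIV. (if \<bar>z$i\<bar> = a then sgn (z$i) else 0)*z$i) = c*a" .
      have 2: "(\<Sum>i\<in>UNIV. if \<bar>z$i\<bar> = a then sgn (z$i) else 0) = gS"
        unfolding sum_if_set gS_def G1_def ..
      have 3: "(if \<bar>z$j\<bar> = a then sgn (z$j) else 0) = 1" using apos' a_def by simp
      show ?thesis using p 1 2 3 by simp
    qed
    have eq2: "\<alpha>*N1 + l*\<sigma>*m = 0"
    proof -
      have p: "\<alpha>*(\<Sum>i\<in>UNIV. (if \<bar>z$i\<bar> = a then 0 else sgn (z$i))*z$i) + l*\<sigma>*(\<Sum>i\<in>UNIV. if \<bar>z$i\<bar> = a then 0 else sgn (z$i))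
          = (if \<bar>z$j\<bar> = a then 0 else sgn (z$j))"
        using probe[OF g, of "\<lambda>y. if \<bar>y\<bar> = a then 0 else sgn y"] unfolding \<sigma>_def by (simp add: sgn_minus)
      have "(\<Sum>i\<in>UNIV. (if \<bar>z$i\<bar> = a then 0 else sgn (z$i))*z$i) = (\<Sum>i\<in>UNIV. if \<bar>z$i\<bar> \<noteq> a then \<bar>z$i\<bar> else 0)"
        by (intro sum.cong) (auto simp: sgn_mul_self)
      also have "\<dots> = N1" unfolding sum_if_set N1_def G2_def ..
      finally have 1: "(\<Sum>i\<in>UNIV. (if \<bar>z$i\<bar> = a then 0 else sgn (z$i))*z$i) = N1" .
      have "(\<Sum>i\<in>UNIV. if \<bar>z$i\<bar> = a then 0 else sgn (z$i)) = (\<Sum>i\<in>UNIV. if \<bar>z$i\<bar> \<noteq> a then sgn (z$i) else 0)"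
        by (intro sum.cong) auto
      also have "\<dots> = m" unfolding sum_if_set m_def G2_def ..
      finally have 2: "(\<Sum>i\<in>UNIV. if \<bar>z$i\<bar> = a then 0 else sgn (z$i)) = m" .
      show ?thesis using p 1 2 a_def apos' by simp
    qed
    have eq3: "\<alpha>*E2 + l*\<sigma>*\<sigma>2 = 0"
    proof -
      have p: "\<alpha>*(\<Sum>i\<in>UNIV. (if \<bar>z$i\<bar> = a then 0 else z$i)*z$i) + l*\<sigma>*(\<Sum>i\<in>UNIV. if \<bar>z$i\<bar> = a then 0 else z$i)
          = (if \<bar>z$j\<bar> = a then 0 else z$j)"
        using probe[OF g, of "\<lambda>y. if \<bar>y\<bar> = a then 0 else y"] unfolding \<sigma>_def by simp
      have "(\<Sum>i\<in>UNIV. (if \<bar>z$i\<bar> = a then 0 else z$i)*z$i) = (\<Sum>i\<in>UNIV. if \<bar>z$i\<bar> \<noteq> a then (z$i)^2 else 0)"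
        by (intro sum.cong) (auto simp: power2_eq_square)
      also have "\<dots> = E2" unfolding sum_if_set E2_def G2_def ..
      finally have 1: "(\<Sum>i\<in>UNIV. (if \<bar>z$i\<bar> = a then 0 else z$i)*z$i) = E2" .
      have "(\<Sum>i\<in>UNIV. if \<bar>z$i\<bar> = a then 0 else z$i) = (\<Sum>i\<in>UNIV. if \<bar>z$i\<bar> \<noteq> a then z$i else 0)"
        by (intro sum.cong) auto
      also have "\<dots> = \<sigma>2" unfolding sum_if_set \<sigma>2_def G2_def ..
      finally have 2: "(\<Sum>i\<in>UNIV. if \<bar>z$i\<bar> = a then 0 else z$i) = \<sigma>2" .
      show ?thesis using p 1 2 a_def apos' by simp
    qed
    have split: "(\<Sum>i\<in>UNIV. f i) = (\<Sum>i\<in>G1. f i) + (\<Sum>i\<in>G2. f i)" for f :: "'n \<Rightarrow> real"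
    proof -
      have "(\<Sum>i\<in>UNIV. f i) = (\<Sum>i\<in>UNIV. (if \<bar>z$i\<bar> = a then f i else 0) + (if \<bar>z$i\<bar> \<noteq> a then f i else 0))"
        by (intro sum.cong) auto
      then show ?thesis unfolding sum.distrib sum_if_set G1_def G2_def .
    qed
    have G1sgn: "z$i = a * sgn (z$i)" if "i \<in> G1" for i
      using that unfolding G1_def by (auto simp: sgn_real_def)
    have sig: "\<sigma> = a*gS + \<sigma>2"
    proof -
      have "(\<Sum>i\<in>G1. z$i) = (\<Sum>i\<in>G1. a * sgn (z$i))" by (intro sum.cong) (auto intro: G1sgn)
      then show ?thesis unfolding \<sigma>_def split[of "\<lambda>i. z$i"] gS_def \<sigma>2_def by (simp add: sum_distrib_left)
    qed
    have l1: "(\<Sum>i\<in>UNIV. \<bar>z$i\<bar>) = c*a + N1"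
    proof -
      have "(\<Sum>i\<in>G1. \<bar>z$i\<bar>) = (\<Sum>i\<in>G1. a)" by (intro sum.cong) (auto simp: G1_def)
      then show ?thesis unfolding split[of "\<lambda>i. \<bar>z$i\<bar>"] N1_def c_def by simp
    qed
    have bs: "\<bar>gS\<bar> \<le> c" unfolding gS_def c_def by (rule sum_abs_sgn) simp
    have bm: "\<bar>m\<bar> \<le> D" unfolding m_def D_def by (rule sum_abs_sgn) simp
    have cs: "N1^2 \<le> D*E2"
      using cs_sum[of G2 "\<lambda>i. \<bar>z$i\<bar>"] unfolding N1_def D_def E2_def by simp
    define X where "X = \<sigma>*gS"
    define Y where "Y = -\<sigma>*m"
    have lhs: "\<alpha> * (\<Sum>i\<in>UNIV. \<bar>z$i\<bar>) = 1 + l*(Y - X)"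
      unfolding l1 X_def Y_def using eq1 eq2 by (simp add: algebra_simps)
    have key: "(\<alpha>+l*n)*(Y-X) < n-2"
    proof (cases "\<sigma> = 0")
      case True then show ?thesis unfolding X_def Y_def using n3 n_def by simp
    next
      case False
      define q where "q = \<sigma>^2"
      have qpos: "q > 0" unfolding q_def using False by simp
      have hY: "l*Y^2 \<le> \<alpha>*D*(a*X - q)"
      proof -
        have "l*Y = \<alpha>*N1" unfolding Y_def using eq2 by (simp add: algebra_simps)
        then have "l^2*Y^2 = \<alpha>^2*N1^2" by (metis power_mult_distrib)
        also have "\<dots> \<le> \<alpha>^2*(D*E2)" using cs by (simp add: mult_left_mono)
        also have "\<alpha>^2*(D*E2) = \<alpha>*D*(\<alpha>*E2)" by (simp add: power2_eq_square)
        also have "\<alpha>*E2 = l*(a*X - q)" using eq3 sig unfolding X_def q_def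
          by (simp add: algebra_simps power2_eq_square)
        finally have "l*(l*Y^2) \<le> l*(\<alpha>*D*(a*X - q))" by (simp add: algebra_simps power2_eq_square)
        then show ?thesis using l by simp
      qed
      have hX: "X^2 \<le> c^2*q"
      proof -
        have "gS^2 \<le> c^2" using bs by (metis abs_le_square_iff abs_of_nonneg c1 dual_order.trans zero_le_one abs_ge_zero)
        then show ?thesis unfolding X_def q_def by (simp add: power_mult_distrib mult_left_mono mult.commute)
      qed
      have hYq: "Y^2 \<le> D^2*q"
      proof -
        have D0: "D \<ge> 0" unfolding D_def by simp
        have "m^2 \<le> D^2" using bm D0 by (metis abs_le_square_iff abs_of_nonneg)
        then have "m^2 * \<sigma>^2 \<le> D^2 * \<sigma>^2" by (rule mult_right_mono) simp
        moreover have "Y^2 = m^2 * \<sigma>^2" unfolding Y_def by (simp add: power_mult_distrib)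
        ultimately show ?thesis unfolding q_def by simp
      qed
      show ?thesis
      proof (cases "D = 0")
        case True
        then have "card G2 = 0" unfolding D_def by simp
        then have "G2 = {}" by simp
        then have "m = 0" "\<sigma>2 = 0" unfolding m_def \<sigma>2_def by auto
        then have "Y = 0" "X = a*gS^2" unfolding Y_def X_def using sig by (auto simp: power2_eq_square)
        moreover have "a*gS^2 \<ge> 0" using apos' by simp
        ultimately have "(\<alpha>+l*n)*(Y-X) \<le> 0" using anl by (simp add: mult_nonneg_nonpos)
        then show ?thesis using n3 n_def by linarith
      next
        case False
        then have "card G2 \<noteq> 0" unfolding D_def by simp
        then have "card G2 \<ge> 1" by linarith
        then have D1: "D \<ge> 1" unfolding D_def by (metis of_nat_1 of_nat_le_iff)
        have "l*Y^2 \<ge> 0" using l by simp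
        then have "\<alpha>*D*(a*X - q) \<ge> 0" using hY by linarith
        moreover have "\<alpha>*D > 0" using apos D1 by simp
        ultimately have "a*X - q \<ge> 0"
        proof -
          assume h1: "\<alpha>*D*(a*X - q) \<ge> 0" and h2: "\<alpha>*D > 0"
          show ?thesis
          proof (rule ccontr)
            assume "\<not> a*X - q \<ge> 0"
            then have "a*X - q < 0" by simp
            then have "\<alpha>*D*(a*X - q) < 0" using h2 by (simp add: mult_pos_neg)
            then show False using h1 by linarith
          qed
        qed
        then have "a*X > 0" using qpos by simp
        then have Xpos: "X > 0" using apos' by (simp add: zero_less_mult_iff)
        have hW: "c*l*Y^2 + c*D*\<alpha>*q + D*l*X^2 \<le> D*X"
        proof -
          have "c*(l*Y^2) \<le> c*(\<alpha>*D*(a*X - q))" using hY c1 by (intro mult_left_mono) auto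
          moreover have "\<alpha>*(c*a) = 1 - l*X" using eq1 unfolding X_def by simp
          moreover have "c*(\<alpha>*D*(a*X - q)) = D*X*(\<alpha>*(c*a)) - c*D*\<alpha>*q"
            by (simp add: algebra_simps)
          ultimately have "c*(l*Y^2) \<le> D*X*(1 - l*X) - c*D*\<alpha>*q"
            by simp
          then show ?thesis by (simp add: algebra_simps power2_eq_square)
        qed
        show ?thesis
        proof (cases "c \<ge> 2")
          case True
          show ?thesis
            by (rule ineq_c2[of n c D l \<alpha> q X Y]) (use cD True D1 l al' qpos Xpos hX hYq hW in auto)
        next
          case False
          then have "card G1 < 2" unfolding c_def by simp
          moreover have "card G1 \<ge> 1" using c1 unfolding c_def by simp
          ultimately have "card G1 = 1" by simp
          then obtain x where "G1 = {x}" by (meson card_1_singletonE)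
          then have G1j: "G1 = {j}" using jG1 by simp
          then have c_1: "c = 1" unfolding c_def by simp
          have s1: "gS = 1" unfolding gS_def G1j using apos' a_def by simp
          then have Xs: "X = \<sigma>" unfolding X_def by simp
          have qX: "q = X^2" unfolding q_def Xs ..
          have Dn: "D = n - 1" using cD c_1 by simp
          have zK: "z \<in> Kset P" using g unfolding good_def by blast
          have mb: "\<bar>m\<bar> \<le> D - 1"
          proof -
            have fin: "finite G2" by simp
            from P_witness[OF sl P0 zK] show ?thesis
            proof
              assume "\<exists>i. z$i = 0"
              then obtain i where "z$i = 0" by blast
              moreover then have "i \<in> G2" unfolding G2_def using apos' by simp
              ultimately show ?thesis unfolding m_def D_def
                using sum_abs_sgn_remove[OF fin, of i "\<lambda>k. z$k"] by simp
            next
              assume "\<exists>i k. i \<noteq> k \<and> z$k = - z$i"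
              then obtain i k where ik: "i \<noteq> k" "z$k = - z$i" by blast
              have "i \<in> G2 \<and> k \<in> G2"
              proof (rule ccontr)
                assume "\<not> (i \<in> G2 \<and> k \<in> G2)"
                then have "i \<in> G1 \<or> k \<in> G1" unfolding G1_def G2_def by auto
                moreover have "\<bar>z$k\<bar> = \<bar>z$i\<bar>" using ik by simp
                ultimately have "i \<in> G1 \<and> k \<in> G1" unfolding G1_def by auto
                then show False using G1j ik by auto
              qed
              then show ?thesis unfolding m_def D_def
                using sum_abs_sgn_remove2[OF fin, of i k "\<lambda>k. z$k"] ik by simp
            qed
          qed
          have Yb: "Y \<le> (n-2)*X"
          proof -
            have "Y \<le> \<bar>\<sigma>\<bar>*\<bar>m\<bar>" unfolding Y_def by (simp add: abs_mult[symmetric])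
            also have "\<dots> \<le> X*(D-1)" using mb Xpos Xs by (simp add: mult_left_mono)
            finally show ?thesis using Dn by (simp add: algebra_simps)
          qed
          have W: "l*Y^2 + (n-1)*\<alpha>*X^2 + (n-1)*l*X^2 \<le> (n-1)*X"
            using hW c_1 Dn qX by (simp add: algebra_simps)
          show ?thesis
            by (rule ineq_c1[of n l \<alpha> X Y]) (use n3 n_def l al' Xpos Yb W in auto)
        qed
      qed
    qed
    show ?thesis by (rule goal_from_key[OF lhs key])
  qed
  then show ?thesis unfolding B_def n_def .
qed


lemma mm_col: "(A ** B)$i$k = (A *v (\<chi> j. B$j$k))$i"
  by (simp add: matrix_matrix_mult_def matrix_vector_mult_def)

lemma S_inverse:
  fixes \<alpha> l :: real
  assumes a: "\<alpha> > 0" and l: "l \<ge> 0"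
  defines "n \<equiv> real CARD('n)"
  defines "c0 \<equiv> l/(\<alpha>*(\<alpha>+l*n))"
  shows "(\<alpha> *\<^sub>R mat 1 + l *\<^sub>R ones_mat :: real^'n^'n) ** ((1/\<alpha>) *\<^sub>R mat 1 - c0 *\<^sub>R ones_mat) = mat 1"
proof -
  have np: "\<alpha> + l*n > 0" using a l unfolding n_def by (simp add: add_pos_nonneg)
  have key: "c0*(\<alpha>+l*n) = l/\<alpha>"
  proof -
    have "c0*(\<alpha>+l*n) = (l*(\<alpha>+l*n))/(\<alpha>*(\<alpha>+l*n))" unfolding c0_def by simp
    also have "\<dots> = l/\<alpha>" by (rule nonzero_mult_divide_mult_cancel_right) (use np in simp)
    finally show ?thesis .
  qed
  show ?thesis
  unfolding vec_eq_iff
  proof (intro allI)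
    fix i k :: 'n
    let ?B = "((1/\<alpha>) *\<^sub>R mat 1 - c0 *\<^sub>R ones_mat) :: real^'n^'n"
    have col: "(\<chi> j. ?B$j$k)$j = (if j = k then 1/\<alpha> else 0) - c0" for j
      by (simp add: mat_def ones_mat_def)
    have sB: "(\<Sum>j\<in>UNIV. (\<chi> j. ?B$j$k)$j) = 1/\<alpha> - n*c0"
      unfolding col by (simp add: sum_subtractf n_def)
    have "((\<alpha> *\<^sub>R mat 1 + l *\<^sub>R ones_mat) ** ?B)$i$k = \<alpha>*((if i = k then 1/\<alpha> else 0) - c0) + l*(1/\<alpha> - n*c0)"
      unfolding mm_col S_mv sB col ..
    also have "\<dots> = (if i = k then 1 else 0)" using a key by (simp add: algebra_simps)
    finally show "((\<alpha> *\<^sub>R mat 1 + l *\<^sub>R ones_mat) ** ?B)$i$k = mat 1 $ i $ k"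
      by (simp add: mat_def)
  qed
qed

lemma inf_norm_Sinv:
  fixes \<alpha> l :: real
  assumes a: "\<alpha> > 0" and l: "l \<ge> 0"
  defines "n \<equiv> real CARD('n)"
  defines "c0 \<equiv> l/(\<alpha>*(\<alpha>+l*n))"
  shows "inf_norm ((1/\<alpha>) *\<^sub>R mat 1 - c0 *\<^sub>R ones_mat :: real^'n^'n) = 1/\<alpha> + (n-2)*c0"
proof -
  have np: "\<alpha> + l*n > 0" using a l unfolding n_def by (simp add: add_pos_nonneg)
  have c0: "c0 \<ge> 0" "c0 < 1/\<alpha>"
  proof -
    show "c0 \<ge> 0" unfolding c0_def using a l np by simp
    have "n \<ge> 1" unfolding n_def by (simp add: Suc_le_eq)
    then have "l*1 \<le> l*n" using l by (intro mult_left_mono) auto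
    then have "l < \<alpha> + l*n" using a by linarith
    then have "l/(\<alpha>+l*n) < 1" using np by simp
    then have "(l/(\<alpha>+l*n))/\<alpha> < 1/\<alpha>" using a by (rule divide_strict_right_mono)
    moreover have "c0 = (l/(\<alpha>+l*n))/\<alpha>" unfolding c0_def by (simp add: divide_divide_eq_left mult.commute)
    ultimately show "c0 < 1/\<alpha>" by simp
  qed
  let ?B = "((1/\<alpha>) *\<^sub>R mat 1 - c0 *\<^sub>R ones_mat) :: real^'n^'n"
  have row: "(\<Sum>j\<in>UNIV. \<bar>?B$i$j\<bar>) = 1/\<alpha> + (n-2)*c0" for i
  proof -
    have "(\<Sum>j\<in>UNIV. \<bar>?B$i$j\<bar>) = \<bar>?B$i$i\<bar> + (\<Sum>j\<in>UNIV-{i}. \<bar>?B$i$j\<bar>)"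
      by (subst sum.remove[of UNIV i]) auto
    also have "(\<Sum>j\<in>UNIV-{i}. \<bar>?B$i$j\<bar>) = (\<Sum>j\<in>UNIV-{i}. c0)"
      by (intro sum.cong) (use c0 in \<open>auto simp: mat_def ones_mat_def\<close>)
    also have "\<dots> = (n-1)*c0" unfolding n_def by (simp add: card_Diff_singleton of_nat_diff card_gt_0_iff Suc_le_eq)
    also have "\<bar>?B$i$i\<bar> = 1/\<alpha> - c0" using c0 by (simp add: mat_def ones_mat_def)
    finally show ?thesis by (simp add: algebra_simps)
  qed
  have "range (\<lambda>i. \<Sum>j\<in>UNIV. \<bar>?B$i$j\<bar>) = {1/\<alpha> + (n-2)*c0}" unfolding row by auto
  then show ?thesis unfolding inf_norm_def by simp
qed

theorem corollary4p11:
  fixes \<alpha> l :: real and P :: "real^'n^'n"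
  assumes "CARD('n) \<ge> 3"
    and "l > 0"
    and "\<alpha> \<ge> (real CARD('n) - 2) * l"
    and "signless_laplacian P"
  defines "S \<equiv> \<alpha> *\<^sub>R mat 1 + l *\<^sub>R ones_mat"
  shows "\<exists>L. ((\<lambda>t::real. matrix_inv (S + t *\<^sub>R P)) \<longlongrightarrow> L) at_top \<and>
             inf_norm L \<le> inf_norm (matrix_inv S) \<and>
             inf_norm (matrix_inv S) =
               1 / \<alpha> + l * (real CARD('n) - 2) / (\<alpha> * (\<alpha> + l * real CARD('n))) \<and>
             (inf_norm L = inf_norm (matrix_inv S) \<longleftrightarrow> P = 0)"
proof -
  note sl = assms(4)
  have n3: "real CARD('n) \<ge> 3" using assms(1) by simp
  have l: "l > 0" using assms(2) .
  have "(real CARD('n) - 2)*l > 0" using n3 l by simp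
  then have apos: "\<alpha> > 0" using assms(3) by linarith
  define n where "n = real CARD('n)"
  define c0 where "c0 = l/(\<alpha>*(\<alpha>+l*n))"
  define Sinv where "Sinv = ((1/\<alpha>) *\<^sub>R mat 1 - c0 *\<^sub>R ones_mat :: real^'n^'n)"
  have SS: "S ** Sinv = mat 1" unfolding S_def Sinv_def c0_def n_def by (rule S_inverse[OF apos less_imp_le[OF l]])
  have iS: "matrix_inv S ** S = mat 1"
    using M_inv(2)[OF sl apos less_imp_le[OF l], of 0] unfolding S_def by simp
  have Sinv_eq: "matrix_inv S = Sinv"
    by (metis SS iS matrix_mul_assoc matrix_mul_lid matrix_mul_rid)
  have normS: "inf_norm (matrix_inv S) = 1 / \<alpha> + l * (real CARD('n) - 2) / (\<alpha> * (\<alpha> + l * real CARD('n)))"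
    unfolding Sinv_eq Sinv_def inf_norm_Sinv[OF apos less_imp_le[OF l]] c0_def n_def
    by (simp add: field_simps)
  define Zc where "Zc j = (THE z. good P \<alpha> l j z)" for j
  have Zc: "good P \<alpha> l j (Zc j) \<and> (fsol \<alpha> l P j \<longlongrightarrow> Zc j) at_top" for j
  proof -
    obtain z where z: "good P \<alpha> l j z" "(fsol \<alpha> l P j \<longlongrightarrow> z) at_top"
      using conv_col[OF sl apos less_imp_le[OF l]] by blast
    have "Zc j = z" unfolding Zc_def
      by (rule the_equality) (use z good_unique[OF apos less_imp_le[OF l]] in blast)+
    then show ?thesis using z by simp
  qed
  define L where "L = (\<chi> i j. Zc j $ i :: real^'n^'n)"
  have tl: "((\<lambda>t. (\<chi> i j. fsol \<alpha> l P j t $ i) :: real^'n^'n) \<longlongrightarrow> L) at_top"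
    unfolding L_def
    by (intro vec_tendstoI) (simp add: tendsto_vec_nth Zc)
  have ev: "eventually (\<lambda>t. (\<chi> i j. fsol \<alpha> l P j t $ i) = matrix_inv (S + t *\<^sub>R P)) at_top"
  proof (rule eventually_at_top_linorderI[of 0])
    fix t :: real assume t: "t \<ge> 0"
    show "(\<chi> i j. fsol \<alpha> l P j t $ i) = matrix_inv (S + t *\<^sub>R P)"
      unfolding fsol_def S_def using t
      by (simp add: vec_eq_iff matrix_vector_mult_basis column_def)
  qed
  have T: "((\<lambda>t::real. matrix_inv (S + t *\<^sub>R P)) \<longlongrightarrow> L) at_top"
    by (rule Lim_transform_eventually[OF tl ev])
  have sym: "Zc j $ i = Zc i $ j" for i j
  proof -
    have gi: "good P \<alpha> l i (Zc i)" and gj: "good P \<alpha> l j (Zc j)" using Zc by blast+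
    have Ki: "Zc i \<in> Kset P" and Kj: "Zc j \<in> Kset P" using gi gj unfolding good_def by blast+
    have "\<alpha>*(\<Sum>k\<in>UNIV. Zc i$k*Zc j$k) + l*(\<Sum>k\<in>UNIV. Zc j$k)*(\<Sum>k\<in>UNIV. Zc i$k) = Zc i $ j"
      using gj Ki unfolding good_def by blast
    moreover have "\<alpha>*(\<Sum>k\<in>UNIV. Zc j$k*Zc i$k) + l*(\<Sum>k\<in>UNIV. Zc i$k)*(\<Sum>k\<in>UNIV. Zc j$k) = Zc j $ i"
      using gi Kj unfolding good_def by blast
    ultimately show ?thesis by (simp add: mult.commute mult.left_commute)
  qed
  show ?thesis
  proof (cases "P = 0")
    case True
    have "((\<lambda>t::real. matrix_inv (S + t *\<^sub>R P)) \<longlongrightarrow> matrix_inv S) at_top"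
      using True by simp
    then have "L = matrix_inv S" using T tendsto_unique trivial_limit_at_top_linorder by blast
    then show ?thesis using T normS True by auto
  next
    case False
    have "inf_norm L < 1 / \<alpha> + l * (real CARD('n) - 2) / (\<alpha> * (\<alpha> + l * real CARD('n)))"
      unfolding inf_norm_def
    proof (subst Max_less_iff)
      show "\<forall>a\<in>range (\<lambda>i. \<Sum>j\<in>UNIV. \<bar>L $ i $ j\<bar>). a < 1 / \<alpha> + l * (real CARD('n) - 2) / (\<alpha> * (\<alpha> + l * real CARD('n)))"
      proof
        fix v assume "v \<in> range (\<lambda>i. \<Sum>j\<in>UNIV. \<bar>L $ i $ j\<bar>)"
        then obtain i where v: "v = (\<Sum>j\<in>UNIV. \<bar>L $ i $ j\<bar>)" by blast
        have "v = (\<Sum>j\<in>UNIV. \<bar>Zc i $ j\<bar>)" unfolding v L_def using sym by simp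
        then show "v < 1 / \<alpha> + l * (real CARD('n) - 2) / (\<alpha> * (\<alpha> + l * real CARD('n)))"
          using norm_bound[OF sl False n3 l assms(3)] Zc by blast
      qed
    qed auto
    then show ?thesis using T normS False by auto
  qed
qed


end
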